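(* Let $n,m$ be positive integers, $\Lambda:\mathbb{C}^{n\times n}\to\mathbb{C}^{m\times m}$ linear and $Y\in\mathbb{C}^{m\times m}$. For a real parameter $k\ge1$, call a pair $(\Phi_I,\Phi_V)$ of Hermitian operators on $\mathcal{H}_{A_1}\otimes\mathcal{H}_{B_1}=\mathbb{C}^n\otimes\mathbb{C}^n$ $k$-feasible if \[ \Phi_V=V\Phi_I,\quad \Phi_I+\Phi_V\ge0,\quad \Phi_I-\Phi_V\ge0,\quad \Phi_I^{T_{A_1}}+k\Phi_V^{T_{A_1}}\ge0,\quad \Phi_I^{T_{A_1}}\ge0, \] \[ k^2\operatorname{Tr}(\Phi_I)+k\operatorname{Tr}(\Phi_V)=1,\qquad (\Lambda_{A_1}\otimes\mathrm{id}_{B_1})(k\Phi_I+\Phi_V)=Y\otimes\operatorname{Tr}_{A_1}(k\Phi_I+\Phi_V). \] If $(\Phi_I,\Phi_V)$ is $k$-feasible with $k\ge1$, then for every real $k'\ge k$ there is a $k'$-feasible pair $(\Phi_I',\Phi_V')$ with $k'^2\Phi_I'+k'\Phi_V'=k^2\Phi_I+k\Phi_V$.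
   Context: $V$ is the swap operator on $\mathbb{C}^n\otimes\mathbb{C}^n$; $T_{A_1}$ denotes the partial transpose on the first factor; $\operatorname{Tr}_{A_1}$ is the partial trace over the first factor; $\Lambda_{A_1}\otimes\mathrm{id}_{B_1}$ applies $\Lambda$ to the first factor; $\ge0$ means positive semidefinite. (This is the symmetry-reduced second level of the hierarchy with partial-transpose constraints, in which the rank bound $k$ appears as a parameter.) *)

theory Defs
  imports Complex_Main
begin

text \<open>Operators on C^n (x) C^n are indexed by 'n \<times> 'n,
 where the first component is the factor A1 and the second is B1.\<close>

type_synonym 'i cmat = "'i \<Rightarrow> 'i \<Rightarrow> complex"

definition mmul :: "('i::finite) cmat \<Rightarrow> 'i cmat \<Rightarrow> 'i cmat" where
  "mmul A B = (\<lambda>i j. \<Sum>k\<in>UNIV. A i k * B k j)"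

definition madd :: "'i cmat \<Rightarrow> 'i cmat \<Rightarrow> 'i cmat" where
  "madd A B = (\<lambda>i j. A i j + B i j)"

definition msub :: "'i cmat \<Rightarrow> 'i cmat \<Rightarrow> 'i cmat" where
  "msub A B = (\<lambda>i j. A i j - B i j)"

definition msmult :: "complex \<Rightarrow> 'i cmat \<Rightarrow> 'i cmat" where
  "msmult c A = (\<lambda>i j. c * A i j)"

definition mtrace :: "('i::finite) cmat \<Rightarrow> complex" where
  "mtrace A = (\<Sum>i\<in>UNIV. A i i)"

definition hermitian :: "'i cmat \<Rightarrow> bool" where
  "hermitian A \<longleftrightarrow> (\<forall>i j. A j i = cnj (A i j))"

definition psd :: "('i::finite) cmat \<Rightarrow> bool" where
  "psd A \<longleftrightarrow> hermitian A \<and>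
     (\<forall>v :: 'i \<Rightarrow> complex. 0 \<le> Re (\<Sum>i\<in>UNIV. \<Sum>j\<in>UNIV. cnj (v i) * A i j * v j))"

definition swapop :: "('n \<times> 'n) cmat" where
  "swapop = (\<lambda>(a,b) (c,d). if a = d \<and> b = c then 1 else 0)"

definition ptransA :: "('a \<times> 'b) cmat \<Rightarrow> ('a \<times> 'b) cmat" where
  "ptransA X = (\<lambda>(a,b) (c,d). X (c,b) (a,d))"

definition ptraceA :: "(('a::finite) \<times> 'b) cmat \<Rightarrow> 'b cmat" where
  "ptraceA X = (\<lambda>b d. \<Sum>a\<in>UNIV. X (a,b) (a,d))"

definition tensor :: "'a cmat \<Rightarrow> 'b cmat \<Rightarrow> ('a \<times> 'b) cmat" where
  "tensor Y Z = (\<lambda>(i,b) (j,d). Y i j * Z b d)"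

definition clinear_map :: "('a cmat \<Rightarrow> 'c cmat) \<Rightarrow> bool" where
  "clinear_map L \<longleftrightarrow> (\<forall>A B. L (madd A B) = madd (L A) (L B)) \<and>
                     (\<forall>c A. L (msmult c A) = msmult c (L A))"

text \<open>(Lambda_A1 (x) id_B1) X: block (b,d) of X on the first factor is mapped by Lambda.\<close>
definition apply_A :: "('a cmat \<Rightarrow> 'c cmat) \<Rightarrow> ('a \<times> 'b) cmat \<Rightarrow> ('c \<times> 'b) cmat" where
  "apply_A L X = (\<lambda>(i,b) (j,d). L (\<lambda>a c. X (a,b) (c,d)) i j)"

definition k_feasible ::
  "('n::finite cmat \<Rightarrow> ('m::finite) cmat) \<Rightarrow> 'm cmat \<Rightarrow> real \<Rightarrow>
   ('n \<times> 'n) cmat \<Rightarrow> ('n \<times> 'n) cmat \<Rightarrow> bool" where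
  "k_feasible L Y k PI PV \<longleftrightarrow>
     hermitian PI \<and> hermitian PV \<and>
     PV = mmul swapop PI \<and>
     psd (madd PI PV) \<and>
     psd (msub PI PV) \<and>
     psd (madd (ptransA PI) (msmult (complex_of_real k) (ptransA PV))) \<and>
     psd (ptransA PI) \<and>
     (complex_of_real k)^2 * mtrace PI + complex_of_real k * mtrace PV = 1 \<and>
     apply_A L (madd (msmult (complex_of_real k) PI) PV)
       = tensor Y (ptraceA (madd (msmult (complex_of_real k) PI) PV))"

end

theory Submission
  imports Defs
begin

lemma herm_comb:
  assumes "hermitian A" "hermitian B"
  shows "hermitian (\<lambda>i j. complex_of_real c * A i j + complex_of_real d * B i j)"
proof -
  have "(\<lambda>i j. complex_of_real c * A i j + complex_of_real d * B i j) j i =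
        cnj ((\<lambda>i j. complex_of_real c * A i j + complex_of_real d * B i j) i j)" for i j
  proof -
    have "A j i = cnj (A i j)" "B j i = cnj (B i j)" using assms unfolding hermitian_def by blast+
    then show ?thesis by simp
  qed
  then show ?thesis unfolding hermitian_def by blast
qed

lemma psd_comb:
  assumes "psd A" "psd B" "c \<ge> 0" "d \<ge> 0"
  shows "psd (\<lambda>i j. complex_of_real c * A i j + complex_of_real d * B i j)"
proof -
  have h: "hermitian (\<lambda>i j. complex_of_real c * A i j + complex_of_real d * B i j)"
    using assms by (intro herm_comb) (auto simp: psd_def)
  have "0 \<le> Re (\<Sum>i\<in>UNIV. \<Sum>j\<in>UNIV. cnj (v i) * (complex_of_real c * A i j + complex_of_real d * B i j) * v j)"
    for v :: "'a \<Rightarrow> complex"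
  proof -
    have e: "(\<Sum>i\<in>UNIV. \<Sum>j\<in>UNIV. cnj (v i) * (complex_of_real c * A i j + complex_of_real d * B i j) * v j)
      = complex_of_real c * (\<Sum>i\<in>UNIV. \<Sum>j\<in>UNIV. cnj (v i) * A i j * v j)
        + complex_of_real d * (\<Sum>i\<in>UNIV. \<Sum>j\<in>UNIV. cnj (v i) * B i j * v j)"
      by (simp add: algebra_simps sum.distrib sum_distrib_left)
    have "0 \<le> Re (\<Sum>i\<in>UNIV. \<Sum>j\<in>UNIV. cnj (v i) * A i j * v j)"
         "0 \<le> Re (\<Sum>i\<in>UNIV. \<Sum>j\<in>UNIV. cnj (v i) * B i j * v j)"
      using assms(1,2) unfolding psd_def by auto
    then show ?thesis unfolding e using assms(3,4) by simp
  qed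
  then show ?thesis using h unfolding psd_def by blast
qed

lemma mmul_swapop: "mmul swapop X = (\<lambda>(a,b) j. X (b,a) j)"
proof (intro ext, clarify)
  fix a b :: 'a and j
  have "mmul swapop X (a,b) j = (\<Sum>k\<in>UNIV. if k = (b,a) then X k j else 0)"
    unfolding mmul_def swapop_def by (intro sum.cong) (auto split: if_splits)
  also have "\<dots> = X (b,a) j" by simp
  finally show "mmul swapop X (a,b) j = X (b,a) j" .
qed

lemma apply_A_smult: "clinear_map L \<Longrightarrow> apply_A L (msmult c X) = msmult c (apply_A L X)"
proof -
  assume l: "clinear_map L"
  show ?thesis
  proof (intro ext, clarify)
    fix i b j d
    have "(\<lambda>a ca. msmult c X (a, b) (ca, d)) = msmult c (\<lambda>a ca. X (a, b) (ca, d))"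
      by (simp add: msmult_def)
    then show "apply_A L (msmult c X) (i, b) (j, d) = msmult c (apply_A L X) (i, b) (j, d)"
      using l unfolding apply_A_def clinear_map_def by (simp add: msmult_def)
  qed
qed

lemma ptraceA_smult: "ptraceA (msmult c X) = msmult c (ptraceA X)"
  by (simp add: ptraceA_def msmult_def sum_distrib_left fun_eq_iff)

lemma tensor_smult: "tensor Y (msmult c X) = msmult c (tensor Y X)"
  by (auto simp: tensor_def msmult_def fun_eq_iff)

lemma mtrace_comb: "mtrace (madd (msmult c A) (msmult d B)) = c * mtrace A + d * mtrace B"
  by (simp add: mtrace_def madd_def msmult_def sum.distrib sum_distrib_left)

lemma id_lin:
  fixes a b k k' P Q :: complex
  assumes "k' * a + b = k^2 / k'" "a + k' * b = k / k'" "k' \<noteq> 0"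
  shows "(a*P + b*Q) + k'*(b*P + a*Q) = (k/k') * (P + k*Q)"
proof -
  have "(a*P + b*Q) + k'*(b*P + a*Q) = (a + k'*b)*P + (k'*a + b)*Q" by (simp add: algebra_simps)
  also have "\<dots> = (k/k')*P + (k^2/k')*Q" using assms by simp
  also have "\<dots> = (k/k') * (P + k*Q)" by (simp add: algebra_simps power2_eq_square)
  finally show ?thesis .
qed

lemma id_lin2:
  fixes a b k k' P Q :: complex
  assumes "k' * a + b = k^2 / k'" "a + k' * b = k / k'" "k' \<noteq> 0"
  shows "k'*(a*P + b*Q) + (b*P + a*Q) = (k/k') * (k*P + Q)"
proof -
  have "k'*(a*P + b*Q) + (b*P + a*Q) = (k'*a + b)*P + (a + k'*b)*Q" by (simp add: algebra_simps)
  also have "\<dots> = (k^2/k')*P + (k/k')*Q" using assms by simp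
  also have "\<dots> = (k/k') * (k*P + Q)" by (simp add: algebra_simps power2_eq_square)
  finally show ?thesis .
qed

lemma id_lin3:
  fixes a b k k' P Q :: complex
  assumes "k' * a + b = k^2 / k'" "a + k' * b = k / k'" "k' \<noteq> 0"
  shows "k'^2*(a*P + b*Q) + k'*(b*P + a*Q) = k^2*P + k*Q"
proof -
  have "k'^2*(a*P + b*Q) + k'*(b*P + a*Q) = k'*((k'*a + b)*P + (a + k'*b)*Q)"
    by (simp add: algebra_simps power2_eq_square)
  also have "\<dots> = k'*((k^2/k')*P + (k/k')*Q)" using assms by simp
  also have "\<dots> = k^2*P + k*Q" using assms(3) by (simp add: algebra_simps)
  finally show ?thesis .
qed

theorem mainTheorem12:
  fixes L :: "('n::finite) cmat \<Rightarrow> ('m::finite) cmat"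
    and Y :: "'m cmat"
    and k :: real
    and PI PV :: "('n \<times> 'n) cmat"
  assumes "clinear_map L"
    and "k \<ge> 1"
    and "k_feasible L Y k PI PV"
  shows "\<forall>k'::real. k' \<ge> k \<longrightarrow>
           (\<exists>PI' PV'. k_feasible L Y k' PI' PV' \<and>
              madd (msmult (complex_of_real (k'^2)) PI') (msmult (complex_of_real k') PV')
              = madd (msmult (complex_of_real (k^2)) PI) (msmult (complex_of_real k) PV))"
proof (intro allI impI)
  fix k' :: real
  assume kk: "k \<le> k'"
  show "\<exists>PI' PV'. k_feasible L Y k' PI' PV' \<and>
              madd (msmult (complex_of_real (k'^2)) PI') (msmult (complex_of_real k') PV')
              = madd (msmult (complex_of_real (k^2)) PI) (msmult (complex_of_real k) PV)"
  proof (cases "k' = k")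
    case True
    then show ?thesis using assms(3) by blast
  next
    case False
    then have kk': "k < k'" using kk by simp
    then have k'1: "k' > 1" using assms(2) by simp
    have "1 < k' * k'" using k'1 by (metis less_1_mult)
    then have d: "k' * (k'^2 - 1) > 0" using k'1 by (simp add: power2_eq_square)
    define a where "a = k * (k*k' - 1) / (k' * (k'^2 - 1))"
    define b where "b = k * (k' - k) / (k' * (k'^2 - 1))"
    have b0: "b \<ge> 0" unfolding b_def using d kk assms(2) by simp
    have "0 \<le> (k-1)*(k'+1)" using assms(2) k'1 by simp
    then have "k' - k \<le> k*k' - 1" by (simp add: algebra_simps)
    then have "k * (k' - k) \<le> k * (k*k' - 1)" using assms(2) by (intro mult_left_mono) auto
    then have ab: "b \<le> a" unfolding a_def b_def using d by (intro divide_right_mono) auto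
    have "0 \<le> k' * ((k-1)*(k+1))" using assms(2) k'1 by simp
    then have "k' - k \<le> k*(k*k' - 1)" by (simp add: algebra_simps)
    then have "k * (k' - k) \<le> k * (k * (k*k' - 1))" using assms(2) by (intro mult_left_mono) auto
    then have "k * (k' - k) / (k' * (k'^2 - 1)) \<le> k * (k * (k*k' - 1)) / (k' * (k'^2 - 1))"
      using d by (intro divide_right_mono) auto
    moreover have "k * a = k * (k * (k*k' - 1)) / (k' * (k'^2 - 1))" unfolding a_def by simp
    ultimately have kab: "b \<le> k * a" unfolding b_def by simp
    have D0: "k'^2 - 1 \<noteq> 0" and K0: "k' \<noteq> 0" using d by auto
    have "k' * a + b = (k' * (k * (k*k' - 1)) + k * (k' - k)) / (k' * (k'^2 - 1))"
      unfolding a_def b_def by (simp add: add_divide_distrib)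
    also have "k' * (k * (k*k' - 1)) + k * (k' - k) = k^2 * (k'^2 - 1)"
      by (simp add: algebra_simps power2_eq_square)
    also have "k^2 * (k'^2 - 1) / (k' * (k'^2 - 1)) = k^2 / k'" using D0 by simp
    finally have r1: "k' * a + b = k^2 / k'" .
    have "a + k' * b = (k * (k*k' - 1) + k' * (k * (k' - k))) / (k' * (k'^2 - 1))"
      unfolding a_def b_def by (simp add: add_divide_distrib)
    also have "k * (k*k' - 1) + k' * (k * (k' - k)) = k * (k'^2 - 1)"
      by (simp add: algebra_simps power2_eq_square)
    also have "k * (k'^2 - 1) / (k' * (k'^2 - 1)) = k / k'" using D0 by simp
    finally have r2: "a + k' * b = k / k'" .
    have a0: "a \<ge> 0" using b0 ab by simp
    define ca where "ca = complex_of_real a"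
    define cb where "cb = complex_of_real b"
    define ck where "ck = complex_of_real k"
    define ck' where "ck' = complex_of_real k'"
    have c1: "ck' * ca + cb = ck^2 / ck'" unfolding ca_def cb_def ck_def ck'_def
      by (simp only: of_real_mult[symmetric] of_real_add[symmetric] of_real_power[symmetric] of_real_divide[symmetric] r1)
    have c2: "ca + ck' * cb = ck / ck'" unfolding ca_def cb_def ck_def ck'_def
      by (simp only: of_real_mult[symmetric] of_real_add[symmetric] of_real_divide[symmetric] r2)
    have c3: "ck' \<noteq> 0" unfolding ck'_def using k'1 by simp
    note F = assms(3)[unfolded k_feasible_def]
    have hI: "hermitian PI" and hV: "hermitian PV" and sw: "PV = mmul swapop PI"
      and p1: "psd (madd PI PV)" and p2: "psd (msub PI PV)"
      and p3: "psd (madd (ptransA PI) (msmult ck (ptransA PV)))"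
      and p4: "psd (ptransA PI)"
      and tr: "ck^2 * mtrace PI + ck * mtrace PV = 1"
      and lin: "apply_A L (madd (msmult ck PI) PV) = tensor Y (ptraceA (madd (msmult ck PI) PV))"
      using F unfolding ck_def by auto
    define PI' where "PI' = (\<lambda>i j. ca * PI i j + cb * PV i j)"
    define PV' where "PV' = (\<lambda>i j. cb * PI i j + ca * PV i j)"
    have swv: "PV (x,y) j = PI (y,x) j" for x y j using sw by (simp add: mmul_swapop)
    have EQ: "madd (msmult (complex_of_real (k'^2)) PI') (msmult (complex_of_real k') PV')
              = madd (msmult (complex_of_real (k^2)) PI) (msmult (complex_of_real k) PV)"
      unfolding PI'_def PV'_def madd_def msmult_def
      using id_lin3[OF c1 c2 c3] by (simp add: ck_def ck'_def fun_eq_iff)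
    have "k_feasible L Y k' PI' PV'"
      unfolding k_feasible_def
    proof (intro conjI)
      show "hermitian PI'" unfolding PI'_def ca_def cb_def by (rule herm_comb[OF hI hV])
      show "hermitian PV'" unfolding PV'_def ca_def cb_def by (rule herm_comb[OF hI hV])
      show "PV' = mmul swapop PI'"
        unfolding PV'_def PI'_def mmul_swapop by (auto simp: fun_eq_iff swv)
      have "psd (\<lambda>i j. complex_of_real (a+b) * madd PI PV i j + complex_of_real 0 * madd PI PV i j)"
        using a0 b0 by (intro psd_comb p1) auto
      moreover have "madd PI' PV' = (\<lambda>i j. complex_of_real (a+b) * madd PI PV i j + complex_of_real 0 * madd PI PV i j)"
        unfolding PI'_def PV'_def madd_def ca_def cb_def by (simp add: fun_eq_iff algebra_simps)
      ultimately show "psd (madd PI' PV')" by simp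
      have "psd (\<lambda>i j. complex_of_real (a-b) * msub PI PV i j + complex_of_real 0 * msub PI PV i j)"
        using ab by (intro psd_comb p2) auto
      moreover have "msub PI' PV' = (\<lambda>i j. complex_of_real (a-b) * msub PI PV i j + complex_of_real 0 * msub PI PV i j)"
        unfolding PI'_def PV'_def msub_def ca_def cb_def by (simp add: fun_eq_iff algebra_simps)
      ultimately show "psd (msub PI' PV')" by simp
      have "psd (\<lambda>i j. complex_of_real (k/k') * madd (ptransA PI) (msmult ck (ptransA PV)) i j
              + complex_of_real 0 * ptransA PI i j)"
        using assms(2) k'1 by (intro psd_comb p3 p4) auto
      moreover have "madd (ptransA PI') (msmult (complex_of_real k') (ptransA PV')) =
         (\<lambda>i j. complex_of_real (k/k') * madd (ptransA PI) (msmult ck (ptransA PV)) i j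
              + complex_of_real 0 * ptransA PI i j)"
        unfolding PI'_def PV'_def madd_def msmult_def ptransA_def
        using id_lin[OF c1 c2 c3] by (auto simp: fun_eq_iff ck_def ck'_def)
      ultimately show "psd (madd (ptransA PI') (msmult (complex_of_real k') (ptransA PV')))" by simp
      have "psd (\<lambda>i j. complex_of_real (a - b/k) * ptransA PI i j
              + complex_of_real (b/k) * madd (ptransA PI) (msmult ck (ptransA PV)) i j)"
        using assms(2) kab b0 by (intro psd_comb p3 p4) (auto simp: field_simps)
      moreover have "ptransA PI' = (\<lambda>i j. complex_of_real (a - b/k) * ptransA PI i j
              + complex_of_real (b/k) * madd (ptransA PI) (msmult ck (ptransA PV)) i j)"
        unfolding PI'_def madd_def msmult_def ptransA_def ca_def cb_def ck_def
        using assms(2) by (auto simp: fun_eq_iff field_simps)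
      ultimately show "psd (ptransA PI')" by simp
      have "(complex_of_real k')^2 * mtrace PI' + complex_of_real k' * mtrace PV'
          = mtrace (madd (msmult (complex_of_real (k'^2)) PI') (msmult (complex_of_real k') PV'))"
        by (simp add: mtrace_comb)
      also have "\<dots> = ck^2 * mtrace PI + ck * mtrace PV" unfolding EQ mtrace_comb ck_def by simp
      finally show "(complex_of_real k')^2 * mtrace PI' + complex_of_real k' * mtrace PV' = 1"
        using tr by simp
      have ME: "madd (msmult (complex_of_real k') PI') PV' = msmult (ck/ck') (madd (msmult ck PI) PV)"
        unfolding PI'_def PV'_def madd_def msmult_def
        using id_lin2[OF c1 c2 c3] by (auto simp: fun_eq_iff ck'_def)
      show "apply_A L (madd (msmult (complex_of_real k') PI') PV') =
            tensor Y (ptraceA (madd (msmult (complex_of_real k') PI') PV'))"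
        unfolding ME apply_A_smult[OF assms(1)] ptraceA_smult tensor_smult lin ..
    qed
    then show ?thesis using EQ by blast
  qed
qed

end
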